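(* Let $\varepsilon>0$ and $n\ge 2$. Consider a colouring of the edges of $\overleftrightarrow{K}_n$ in which at least $(1+\varepsilon)\binom{n}{2}$ edges are blue. Then for every oriented tree $T$ with $|T|\le\lceil\varepsilon n/2\rceil$ there is a copy of $T$ all of whose edges are blue.
   Context: $\overleftrightarrow{K}_n$ is the complete directed graph on $n$ vertices: it has an edge $xy$ for every ordered pair $(x,y)$ of distinct vertices. An oriented tree is a directed graph without loops or bidirected edges whose underlying graph is a tree; $|T|$ is its number of vertices. *)

theory Defs
  imports Complex_Main
begin

definition complete_digraph_edges :: "nat \<Rightarrow> (nat \<times> nat) set" where
  "complete_digraph_edges n = {(x, y). x < n \<and> y < n \<and> x \<noteq> y}"

definition und_adj :: "('a \<times> 'a) set \<Rightarrow> 'a \<Rightarrow> 'a \<Rightarrow> bool" where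
  "und_adj A x y \<longleftrightarrow> (x, y) \<in> A \<or> (y, x) \<in> A"

definition und_connected :: "'a set \<Rightarrow> ('a \<times> 'a) set \<Rightarrow> bool" where
  "und_connected V A \<longleftrightarrow>
     (\<forall>x\<in>V. \<forall>y\<in>V. (x, y) \<in> (A \<union> A\<inverse>)\<^sup>*)"

definition und_cycle :: "'a set \<Rightarrow> ('a \<times> 'a) set \<Rightarrow> 'a list \<Rightarrow> bool" where
  "und_cycle V A vs \<longleftrightarrow> length vs \<ge> 3 \<and> distinct vs \<and> set vs \<subseteq> V \<and>
     (\<forall>i. Suc i < length vs \<longrightarrow> und_adj A (vs ! i) (vs ! Suc i)) \<and>
     und_adj A (last vs) (hd vs)"

definition oriented_tree :: "'a set \<Rightarrow> ('a \<times> 'a) set \<Rightarrow> bool" where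
  "oriented_tree V A \<longleftrightarrow> finite V \<and> V \<noteq> {} \<and> A \<subseteq> V \<times> V \<and>
     (\<forall>x. (x, x) \<notin> A) \<and> (\<forall>x y. (x, y) \<in> A \<longrightarrow> (y, x) \<notin> A) \<and>
     und_connected V A \<and> \<not> (\<exists>vs. und_cycle V A vs)"

definition has_copy_in :: "'a set \<Rightarrow> ('a \<times> 'a) set \<Rightarrow> nat \<Rightarrow> (nat \<times> nat) set \<Rightarrow> bool" where
  "has_copy_in V A n B \<longleftrightarrow> (\<exists>f. inj_on f V \<and> f ` V \<subseteq> {..<n} \<and>
     (\<forall>(x, y) \<in> A. (f x, f y) \<in> B))"

end

theory Submission
  imports Defs
begin

lemma leaf_exists:
  assumes T: "oriented_tree V A" and c: "card V \<ge> 2"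
  shows "\<exists>v w. v \<in> V \<and> w \<in> V \<and> v \<noteq> w \<and> und_adj A v w \<and> (\<forall>z. und_adj A v z \<longrightarrow> z = w)"
proof -
  have fin: "finite V" and AV: "A \<subseteq> V \<times> V" and nl: "\<forall>x. (x,x) \<notin> A"
    and conn: "und_connected V A" and ncyc: "\<not>(\<exists>vs. und_cycle V A vs)"
    using T by (auto simp: oriented_tree_def)
  have adjV: "und_adj A a b \<Longrightarrow> a \<in> V \<and> b \<in> V" for a b using AV by (auto simp: und_adj_def)
  have adjne: "und_adj A a b \<Longrightarrow> a \<noteq> b" for a b using nl by (auto simp: und_adj_def)
  have adjsym: "und_adj A a b \<Longrightarrow> und_adj A b a" for a b by (auto simp: und_adj_def)
  obtain x y where xy: "x \<in> V" "y \<in> V" "x \<noteq> y"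
  proof -
    have "\<not> V \<subseteq> {x}" if "x \<in> V" for x
    proof
      assume "V \<subseteq> {x}"
      hence "card V \<le> card {x}" by (intro card_mono) auto
      thus False using c by simp
    qed
    moreover have "V \<noteq> {}" using c by auto
    ultimately show ?thesis using that by blast
  qed
  have "(x,y) \<in> (A \<union> A\<inverse>)\<^sup>*" using conn xy by (auto simp: und_connected_def)
  then obtain z where "(x,z) \<in> A \<union> A\<inverse>" using xy(3) by (cases rule: converse_rtranclE) auto
  hence xz: "und_adj A x z" by (auto simp: und_adj_def)
  define P where "P vs \<longleftrightarrow> distinct vs \<and> set vs \<subseteq> V \<and> 2 \<le> length vs \<and>
      (\<forall>i. Suc i < length vs \<longrightarrow> und_adj A (vs!i) (vs!Suc i))" for vs
  have P0: "P [x,z]"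
    unfolding P_def using xz adjV[OF xz] adjne[OF xz] by (auto simp: less_Suc_eq)
  have bound: "P vs \<Longrightarrow> length vs < card V + 1" for vs
    using fin by (metis P_def card_mono distinct_card less_Suc_eq_le Suc_eq_plus1)
  obtain vs where Pvs: "P vs" and mx: "\<forall>us. P us \<longrightarrow> length us \<le> length vs"
    using Lattices_Big.ex_has_greatest_nat[of P "[x,z]" length "card V + 1"] P0 bound by blast
  have "2 \<le> length vs" using Pvs by (simp add: P_def)
  then obtain a b rest where vs: "vs = a # b # rest"
    by (metis Suc_le_length_iff numeral_2_eq_2)
  have ab: "und_adj A a b" using Pvs vs unfolding P_def by (metis nth_Cons_0 nth_Cons_Suc length_Cons zero_less_Suc Suc_less_eq)
  show ?thesis
  proof (intro exI conjI allI impI)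
    show "a \<in> V" "b \<in> V" using adjV[OF ab] by auto
    show "a \<noteq> b" using adjne[OF ab] .
    show "und_adj A a b" using ab .
    fix u assume au: "und_adj A a u"
    show "u = b"
    proof (rule ccontr)
      assume ub: "u \<noteq> b"
      show False
      proof (cases "u \<in> set vs")
        case False
        have "P (u # vs)"
          unfolding P_def
        proof (intro conjI allI impI)
          show "distinct (u # vs)" using False Pvs by (simp add: P_def)
          show "set (u # vs) \<subseteq> V" using Pvs adjV[OF au] by (simp add: P_def)
          show "2 \<le> length (u # vs)" using Pvs by (simp add: P_def)
          fix i assume i: "Suc i < length (u # vs)"
          show "und_adj A ((u # vs) ! i) ((u # vs) ! Suc i)"
          proof (cases i)
            case 0 thus ?thesis using adjsym[OF au] vs by simp
          next
            case (Suc j) thus ?thesis using Pvs i by (simp add: P_def)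
          qed
        qed
        then have "length (u#vs) \<le> length vs" using mx by blast
        thus False by simp
      next
        case True
        then obtain j where j: "j < length vs" "vs!j = u" by (auto simp: in_set_conv_nth)
        have "j \<noteq> 0" using j vs adjne[OF au] by (metis nth_Cons_0)
        moreover have "j \<noteq> 1" using j vs ub by (metis One_nat_def nth_Cons_0 nth_Cons_Suc)
        ultimately have j2: "j \<ge> 2" by auto
        have "und_cycle V A (take (Suc j) vs)"
          unfolding und_cycle_def
        proof (intro conjI allI impI)
          show "3 \<le> length (take (Suc j) vs)" using j j2 by simp
          show "distinct (take (Suc j) vs)" using Pvs by (simp add: P_def)
          show "set (take (Suc j) vs) \<subseteq> V" using Pvs set_take_subset by (fastforce simp: P_def)
          fix i assume "Suc i < length (take (Suc j) vs)"
          thus "und_adj A (take (Suc j) vs ! i) (take (Suc j) vs ! Suc i)"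
            using Pvs by (simp add: P_def)
        next
          have "last (take (Suc j) vs) = vs ! j" using j by (subst last_conv_nth) (auto simp: min_def, subgoal_tac "length vs - Suc 0 = j", auto)
          moreover have "hd (take (Suc j) vs) = a" using vs by simp
          ultimately show "und_adj A (last (take (Suc j) vs)) (hd (take (Suc j) vs))"
            using j adjsym[OF au] by simp
        qed
        with ncyc show False by blast
      qed
    qed
  qed
qed


lemma tree_remove_leaf:
  assumes T: "oriented_tree V A" and v: "v \<in> V" and w: "w \<in> V" "v \<noteq> w"
    and leaf: "\<forall>z. und_adj A v z \<longrightarrow> z = w"
  shows "oriented_tree (V - {v}) (A \<inter> (V - {v}) \<times> (V - {v}))"
proof -
  have fin: "finite V" and AV: "A \<subseteq> V \<times> V" and nl: "\<forall>x. (x,x) \<notin> A"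
    and nb: "\<forall>x y. (x, y) \<in> A \<longrightarrow> (y, x) \<notin> A"
    and conn: "und_connected V A" and ncyc: "\<not>(\<exists>vs. und_cycle V A vs)"
    using T by (auto simp: oriented_tree_def)
  define V' where "V' = V - {v}"
  define A' where "A' = A \<inter> V' \<times> V'"
  have ncyc': "\<not>(\<exists>vs. und_cycle V' A' vs)"
  proof
    assume "\<exists>vs. und_cycle V' A' vs"
    then obtain vs where "und_cycle V' A' vs" by blast
    hence "und_cycle V A vs" unfolding und_cycle_def und_adj_def A'_def V'_def by auto
    with ncyc show False by blast
  qed
  have key: "(x,y) \<in> (A \<union> A\<inverse>)\<^sup>* \<Longrightarrow> x \<in> V' \<Longrightarrow>
      (y \<noteq> v \<longrightarrow> (x,y) \<in> (A' \<union> A'\<inverse>)\<^sup>*) \<and> (y = v \<longrightarrow> (x,w) \<in> (A' \<union> A'\<inverse>)\<^sup>*)" for x y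
  proof (induction rule: rtrancl_induct)
    case base thus ?case by (auto simp: V'_def)
  next
    case (step y z)
    have yz: "und_adj A y z" using step.hyps(2) by (auto simp: und_adj_def)
    have yzV: "y \<in> V" "z \<in> V" using step.hyps(2) AV by auto
    show ?case
    proof (cases "z = v")
      case True
      then have "y \<noteq> v" using yz nl by (auto simp: und_adj_def)
      moreover have "y = w" using leaf yz True by (auto simp: und_adj_def)
      ultimately show ?thesis using step True by auto
    next
      case False
      show ?thesis
      proof (cases "y = v")
        case True
        have "z = w" using leaf yz True by (auto simp: und_adj_def)
        thus ?thesis using step True False by auto
      next
        case False2: False
        have "(y,z) \<in> A' \<union> A'\<inverse>" using step.hyps(2) yzV False False2
          by (auto simp: A'_def V'_def)
        thus ?thesis using step False False2 by (meson rtrancl.rtrancl_into_rtrancl)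
      qed
    qed
  qed
  have conn': "und_connected V' A'"
    unfolding und_connected_def
  proof (intro ballI)
    fix x y assume xy: "x \<in> V'" "y \<in> V'"
    hence "(x,y) \<in> (A \<union> A\<inverse>)\<^sup>*" using conn by (auto simp: und_connected_def V'_def)
    thus "(x,y) \<in> (A' \<union> A'\<inverse>)\<^sup>*" using key xy by (auto simp: V'_def)
  qed
  have "V' \<noteq> {}" using w by (auto simp: V'_def)
  thus ?thesis using fin nl nb conn' ncyc' unfolding oriented_tree_def V'_def[symmetric] A'_def[symmetric]
    by (auto simp: A'_def V'_def)
qed

lemma degen:
  fixes E :: "('b \<times> 'b) set"
  assumes sym: "\<forall>x y. (x,y) \<in> E \<longrightarrow> (y,x) \<in> E" and irr: "\<forall>x. (x,x) \<notin> E"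
  shows "finite W \<Longrightarrow> (\<exists>U. U \<noteq> {} \<and> U \<subseteq> W \<and> (\<forall>x\<in>U. d+1 \<le> card {y\<in>U. (x,y) \<in> E}))
     \<or> card (E \<inter> W \<times> W) \<le> 2*d*(card W - 1)"
proof (induction "card W" arbitrary: W rule: less_induct)
  case less
  show ?case
  proof (cases "W = {}")
    case True then show ?thesis by simp
  next
    case Wne: False
    show ?thesis
    proof (cases "\<forall>x\<in>W. d+1 \<le> card {y\<in>W. (x,y) \<in> E}")
      case True thus ?thesis using Wne by blast
    next
      case False
      then obtain x where x: "x \<in> W" "card {y\<in>W. (x,y) \<in> E} \<le> d" by force
      define W' where "W' = W - {x}"
      have fW': "finite W'" using less.prems by (simp add: W'_def)
      have "card W' < card W" using x less.prems unfolding W'_def by (meson card_Diff1_less x(1))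
      from less.hyps[OF this fW']
      show ?thesis
      proof
        assume "\<exists>U. U \<noteq> {} \<and> U \<subseteq> W' \<and> (\<forall>x\<in>U. d+1 \<le> card {y\<in>U. (x,y) \<in> E})"
        thus ?thesis by (auto simp: W'_def)
      next
        assume h: "card (E \<inter> W' \<times> W') \<le> 2*d*(card W' - 1)"
        define S where "S = {y\<in>W. (x,y) \<in> E}"
        have fS: "finite S" using less.prems by (simp add: S_def)
        have sub: "E \<inter> W \<times> W \<subseteq> (E \<inter> W' \<times> W') \<union> Pair x ` S \<union> (\<lambda>y. (y,x)) ` S"
          using sym by (auto simp: W'_def S_def)
        have "card (E \<inter> W \<times> W) \<le> card ((E \<inter> W' \<times> W') \<union> Pair x ` S \<union> (\<lambda>y. (y,x)) ` S)"
          using fW' fS by (intro card_mono[OF _ sub]) auto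
        also have "\<dots> \<le> card (E \<inter> W' \<times> W') + card (Pair x ` S) + card ((\<lambda>y. (y,x)) ` S)"
          by (meson add_le_mono card_Un_le dual_order.trans le_refl)
        also have "\<dots> \<le> 2*d*(card W' - 1) + d + d"
          using h card_image_le[OF fS, of "Pair x"] card_image_le[OF fS, of "\<lambda>y. (y,x)"] x(2)
          unfolding S_def by linarith
        finally have c1: "card (E \<inter> W \<times> W) \<le> 2*d*(card W' - 1) + d + d" .
        have cW: "card W = Suc (card W')" using x less.prems unfolding W'_def by (metis card_Suc_Diff1)
        show ?thesis
        proof (cases "card W' = 0")
          case True
          hence "W' = {}" using fW' by simp
          hence "W = {x}" using x by (auto simp: W'_def)
          hence "E \<inter> W \<times> W = {}" using irr by auto
          thus ?thesis by simp
        next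
          case False
          then obtain c where "card W' = Suc c" by (cases "card W'") auto
          thus ?thesis using c1 cW by (simp add: algebra_simps)
        qed
      qed
    qed
  qed
qed


lemma embed:
  fixes E :: "('b \<times> 'b) set"
  assumes U: "finite U" "U \<noteq> {}" and sym: "\<forall>x y. (x,y) \<in> E \<longrightarrow> (y,x) \<in> E"
    and irr: "\<forall>x. (x,x) \<notin> E"
    and deg: "\<forall>x\<in>U. m \<le> card {y\<in>U. (x,y) \<in> E}"
  shows "oriented_tree V A \<Longrightarrow> card V \<le> m+1 \<Longrightarrow>
    \<exists>f. inj_on f V \<and> f ` V \<subseteq> U \<and> (\<forall>(x,y)\<in>A. (f x, f y) \<in> E)"
proof (induction "card V" arbitrary: V A rule: less_induct)
  case less
  have fin: "finite V" and Vne: "V \<noteq> {}" and AV: "A \<subseteq> V \<times> V" and nl: "\<forall>x. (x,x) \<notin> A"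
    using less.prems by (auto simp: oriented_tree_def)
  show ?case
  proof (cases "card V \<ge> 2")
    case False
    then have "card V = 1" using fin Vne by (cases "card V") (auto simp: card_gt_0_iff)
    then obtain a where Va: "V = {a}" by (rule card_1_singletonE)
    then have "A = {}" using AV nl by auto
    obtain u0 where "u0 \<in> U" using U by auto
    thus ?thesis using Va \<open>A = {}\<close> by (intro exI[of _ "\<lambda>_. u0"]) auto
  next
    case True
    obtain v w where vw: "v \<in> V" "w \<in> V" "v \<noteq> w" "und_adj A v w" and leaf: "\<forall>z. und_adj A v z \<longrightarrow> z = w"
      using leaf_exists[OF less.prems(1) True] by blast
    define V' where "V' = V - {v}"
    define A' where "A' = A \<inter> V' \<times> V'"
    have T': "oriented_tree V' A'" unfolding V'_def A'_def
      by (rule tree_remove_leaf[OF less.prems(1) vw(1,2,3) leaf])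
    have cV: "card V = Suc (card V')" using fin vw(1) unfolding V'_def by (metis card_Suc_Diff1)
    have "card V' < card V" "card V' \<le> m + 1" using cV less.prems(2) by auto
    from less.hyps[OF this(1) T' this(2)] obtain f' where
      f': "inj_on f' V'" "f' ` V' \<subseteq> U" "\<forall>(x,y)\<in>A'. (f' x, f' y) \<in> E" by blast
    have wV': "w \<in> V'" using vw by (auto simp: V'_def)
    define N where "N = {y\<in>U. (f' w, y) \<in> E}"
    have cN: "m \<le> card N" using deg f'(2) wV' by (auto simp: N_def)
    have "\<not> N \<subseteq> f' ` V'"
    proof
      assume "N \<subseteq> f' ` V'"
      hence "N \<subseteq> f' ` V' - {f' w}" using irr by (auto simp: N_def)
      hence "card N \<le> card (f' ` V' - {f' w})" using fin by (intro card_mono) (auto simp: V'_def)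
      also have "\<dots> = card V' - 1" using f'(1) wV' fin
        by (simp add: card_image V'_def)
      finally have "card N < card V'" using wV' fin card_gt_0_iff[of V'] by (auto simp: V'_def)
      thus False using cN cV less.prems(2) by simp
    qed
    then obtain u where u: "u \<in> N" "u \<notin> f' ` V'" by blast
    define f where "f = f'(v := u)"
    have fV': "\<forall>x\<in>V'. f x = f' x" by (auto simp: f_def V'_def)
    have Vins: "V = insert v V'" using vw by (auto simp: V'_def)
    have vV': "v \<notin> V'" by (simp add: V'_def)
    have "inj_on f V' = inj_on f' V'" by (rule inj_on_cong) (use fV' in auto)
    hence "inj_on f V'" using f'(1) by simp
    moreover have "f v \<notin> f ` V'" using u fV' by (auto simp: f_def)
    ultimately have inj: "inj_on f V" using Vins vV' by simp
    have img: "f ` V \<subseteq> U" using Vins fV' f'(2) u(1) by (auto simp: f_def N_def)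
    have arcs: "\<forall>(x,y)\<in>A. (f x, f y) \<in> E"
    proof (intro ballI, clarify)
      fix x y assume xy: "(x,y) \<in> A"
      show "(f x, f y) \<in> E"
      proof (cases "x = v")
        case True
        hence "y = w" using leaf xy by (auto simp: und_adj_def)
        moreover have "y \<noteq> v" using xy nl True by auto
        moreover have "(f' w, u) \<in> E" using u(1) by (simp add: N_def)
        ultimately show ?thesis using True sym fV' wV' by (simp add: f_def)
      next
        case False
        show ?thesis
        proof (cases "y = v")
          case True
          hence "x = w" using leaf xy by (auto simp: und_adj_def)
          moreover have "(f' w, u) \<in> E" using u(1) by (simp add: N_def)
          ultimately show ?thesis using True False fV' wV' by (simp add: f_def)
        next
          case False2: False
          have "(x,y) \<in> A'" using xy AV False False2 by (auto simp: A'_def V'_def)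
          moreover have "x \<in> V'" "y \<in> V'" using xy AV False False2 by (auto simp: V'_def)
          ultimately show ?thesis using f'(3) fV' by auto
        qed
      qed
    qed
    show ?thesis using inj img arcs by blast
  qed
qed


lemma two_choose2: "2 * (n choose 2) = n*(n-1)"
  by (induction n) (auto simp: choose_two algebra_simps)

theorem mainTheorem9:
  fixes \<epsilon> :: real and n :: nat and Blue :: "(nat \<times> nat) set"
    and V :: "'a set" and A :: "('a \<times> 'a) set"
  assumes "\<epsilon> > 0" and "n \<ge> 2"
    and "Blue \<subseteq> complete_digraph_edges n"
    and "real (card Blue) \<ge> (1 + \<epsilon>) * real (n choose 2)"
    and "oriented_tree V A"
    and "int (card V) \<le> \<lceil>\<epsilon> * real n / 2\<rceil>"
  shows "has_copy_in V A n Blue"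
proof -
  note eps = assms(1) and n2 = assms(2) and BC = assms(3) and cB = assms(4) and T = assms(5)
    and kb = assms(6)
  define C where "C = complete_digraph_edges n"
  have CC: "C = {..<n} \<times> {..<n} - (\<lambda>x. (x,x)) ` {..<n}"
    by (auto simp: C_def complete_digraph_edges_def)
  have cardC: "card C = n*n - n"
  proof -
    have "card C = card ({..<n} \<times> {..<n}) - card ((\<lambda>x. (x,x)) ` {..<n})"
      unfolding CC by (rule card_Diff_subset) auto
    also have "card ((\<lambda>x. (x,x)) ` {..<n}) = n" by (subst card_image) (auto simp: inj_on_def)
    finally show ?thesis by (simp add: card_cartesian_product)
  qed
  have finC: "finite C" unfolding CC by auto
  have finB: "finite Blue" using BC finC by (auto simp: C_def intro: finite_subset)
  have convB: "Blue\<inverse> = prod.swap ` Blue" by auto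
  have cBi: "card (Blue\<inverse>) = card Blue"
    unfolding convB by (rule card_image) (auto simp: inj_on_def)
  have BiC: "Blue\<inverse> \<subseteq> C" using BC by (auto simp: C_def complete_digraph_edges_def)
  define E where "E = Blue \<inter> Blue\<inverse>"
  have "card (Blue \<union> Blue\<inverse>) + card E = card Blue + card (Blue\<inverse>)"
    using card_Un_Int[of Blue "Blue\<inverse>"] finB by (simp add: E_def)
  moreover have "card (Blue \<union> Blue\<inverse>) \<le> card C"
    using BC BiC finC by (intro card_mono) (auto simp: C_def)
  ultimately have cE: "2 * card Blue \<le> card E + (n*n - n)" using cBi cardC by linarith
  have nn: "real (n*n - n) = real n * (real n - 1)" using n2
    by (simp add: of_nat_diff algebra_simps)
  have ch: "2 * real (n choose 2) = real n * (real n - 1)"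
    using two_choose2[of n] n2 by (metis nn of_nat_mult of_nat_numeral diff_mult_distrib2 mult_1_right)
  have cE': "\<epsilon> * (real n * (real n - 1)) \<le> real (card E)"
  proof -
    have "2 * real (card Blue) \<le> real (card E) + real n * (real n - 1)"
      using cE nn by (metis of_nat_add of_nat_le_iff of_nat_mult of_nat_numeral)
    moreover have "\<epsilon> * (real n * (real n - 1)) = 2 * (\<epsilon> * real (n choose 2))"
      using ch by (metis mult.left_commute)
    moreover have "(1 + \<epsilon>) * real (n choose 2) = real (n choose 2) + \<epsilon> * real (n choose 2)"
      by (simp add: algebra_simps)
    ultimately show ?thesis using cB ch by linarith
  qed
  have Esym: "\<forall>x y. (x,y) \<in> E \<longrightarrow> (y,x) \<in> E" by (auto simp: E_def)
  have Eirr: "\<forall>x. (x,x) \<notin> E" using BC by (auto simp: E_def complete_digraph_edges_def)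
  have EB: "E \<subseteq> Blue" by (auto simp: E_def)
  have Esub: "E \<subseteq> {..<n} \<times> {..<n}" using BC by (auto simp: E_def complete_digraph_edges_def)
  define k where "k = card V"
  have finV: "finite V" and Vne: "V \<noteq> {}" using T by (auto simp: oriented_tree_def)
  have k1: "k \<ge> 1" using finV Vne by (simp add: k_def Suc_le_eq card_gt_0_iff)
  have kr: "real k - 1 < \<epsilon> * real n / 2"
    using kb le_ceiling_iff[of "int k" "\<epsilon> * real n / 2"] by (simp add: k_def)
  define d where "d = k - 2"
  have dlt: "2 * real d < \<epsilon> * real n"
  proof (cases "k \<ge> 2")
    case True thus ?thesis using kr by (simp add: d_def of_nat_diff)
  next
    case False thus ?thesis using eps n2 by (simp add: d_def)
  qed
  have n1: "real n - 1 > 0" using n2 by simp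
  have "2 * real d * (real n - 1) < \<epsilon> * real n * (real n - 1)"
    using dlt n1 by (intro mult_strict_right_mono) auto
  hence notsmall: "\<not> card (E \<inter> {..<n} \<times> {..<n}) \<le> 2*d*(card {..<n} - 1)"
  proof -
    assume h: "2 * real d * (real n - 1) < \<epsilon> * real n * (real n - 1)"
    have EE: "E \<inter> {..<n} \<times> {..<n} = E" using Esub by auto
    have "real (2*d*(n - 1)) = 2 * real d * (real n - 1)" using n2 by (simp add: of_nat_diff)
    hence "real (2*d*(n - 1)) < real (card E)" using h cE' by (simp add: algebra_simps)
    hence "2*d*(n - 1) < card E" by (simp only: of_nat_less_iff)
    thus ?thesis unfolding EE by simp
  qed
  obtain U where U: "U \<noteq> {}" "U \<subseteq> {..<n}" "\<forall>x\<in>U. d+1 \<le> card {y\<in>U. (x,y) \<in> E}"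
    using degen[OF Esym Eirr, of "{..<n}" d] notsmall by auto
  have finU: "finite U" using U(2) finite_subset by blast
  have "card V \<le> (d+1) + 1" using k1 by (simp add: d_def k_def[symmetric])
  then obtain f where f: "inj_on f V" "f ` V \<subseteq> U" "\<forall>(x,y)\<in>A. (f x, f y) \<in> E"
    using embed[OF finU U(1) Esym Eirr U(3) T] by blast
  show ?thesis unfolding has_copy_in_def
    using f U(2) EB by (intro exI[of _ f]) blast
qed

end
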